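(* Let $t \ge 1$ and let $A \subseteq \mathbb{Z}^2$ be a set of $t$ cells, where a cell $(x,y)$ denotes row $x$ (rows numbered increasing downwards) and column $y$ (columns numbered increasing rightwards). Suppose the following two conditions hold. (First flood.) There exist pairwise distinct cells $c_1,\dots,c_t$ with $A=\{c_1,\dots,c_t\}$, and integers $s_1,\dots,s_{t-1}\in\{0,1\}$ such that, setting $r_0=0$ and $r_j=r_{j-1}+s_j$, we have $r_j\in\{0,1\}$ for all $1\le j\le t-1$, and for every $1\le j\le t-1$ there is an index $\ell\le j$ with $$c_{j+1}=\begin{cases} c_\ell+(1,0) & \text{if } r_j=0 \text{ (the cell directly below } c_\ell),\\ c_\ell+(0,1) & \text{if } r_j=1 \text{ (the cell directly to the right of } c_\ell).\end{cases}$$ (Second flood.) There exist pairwise distinct cells $d_1,\dots,d_t$ with $A=\{d_1,\dots,d_t\}$, and integers $s'_1,\dots,s'_{t-1}\in\{0,1\}$ such that, setting $r'_0=0$ and $r'_j=r'_{j-1}+s'_j$, we have $r'_j\in\{0,1\}$ for all $1\le j\le t-1$, and for every $1\le j\le t-1$ there is an index $\ell\le j$ with $$d_{j+1}=\begin{cases} d_\ell+(-1,0) & \text{if } r'_j=0 \text{ (the cell directly above } d_\ell),\\ d_\ell+(0,-1) & \text{if } r'_j=1 \text{ (the cell directly to the left of } d_\ell).\end{cases}$$ Then $A$ is a rectangle: there are integers $a\le a'$ and $b\le b'$ with $A=\{a,\dots,a'\}\times\{b,\dots,b'\}$ and $(a'-a+1)(b'-b+1)=t$; moreover $c_1=(a,b)$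 is its top-left corner and $d_1=(a',b')$ is its bottom-right corner.
   Context: This is the combinatorial core of the soundness of a card-based zero-knowledge protocol for the Shikaku puzzle (partition an $m\times n$ grid into rectangles, each containing exactly one given number equal to its area). In the protocol, a prover marks a region by a "first flood" starting from one cell and repeatedly marking a new, previously unmarked cell adjacent to an already marked one, moving only downwards while a secret direction bit $r$ equals $0$ and only rightwards once $r=1$ (where $r$ is updated by secretly adding $s\in\{0,1\}$ and publicly checking $r\ne 2$), followed by a "second flood" over exactly the same set of cells starting from one cell and moving only upwards while $r=0$ and only leftwards once $r=1$. The hypotheses above formalize these two floods. *)

theory Defs
  imports Main
begin

type_synonym cell = "int \<times> int"

definition cell_add :: "cell \<Rightarrow> cell \<Rightarrow> cell" where
  "cell_add p q = (fst p + fst q, snd p + snd q)"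

fun flood_r :: "(nat \<Rightarrow> int) \<Rightarrow> nat \<Rightarrow> int" where
  "flood_r s 0 = 0"
| "flood_r s (Suc j) = flood_r s j + s (Suc j)"

definition is_flood :: "cell \<Rightarrow> cell \<Rightarrow> nat \<Rightarrow> cell set \<Rightarrow> (nat \<Rightarrow> cell) \<Rightarrow> (nat \<Rightarrow> int) \<Rightarrow> bool" where
  "is_flood v0 v1 t A c s \<longleftrightarrow>
     inj_on c {1..t} \<and> A = c ` {1..t} \<and>
     (\<forall>j\<in>{1..t-1}. s j \<in> {0, 1}) \<and>
     (\<forall>j\<in>{1..t-1}. flood_r s j \<in> {0, 1}) \<and>
     (\<forall>j\<in>{1..t-1}. \<exists>l\<in>{1..j}.
        c (j + 1) = cell_add (c l) (if flood_r s j = 0 then v0 else v1))"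

end

theory Submission
  imports Defs
begin

definition neg :: "cell \<Rightarrow> cell" where "neg p = (- fst p, - snd p)"

lemma flood_neg:
  assumes "is_flood (-1, 0) (0, -1) t A d s'"
  shows "is_flood (1, 0) (0, 1) t (neg ` A) (neg \<circ> d) s'"
proof -
  have inj: "inj neg" unfolding inj_def neg_def by (auto simp: prod_eq_iff)
  from assms show ?thesis
    unfolding is_flood_def
    apply (intro conjI)
    subgoal using inj by (auto intro: comp_inj_on inj_on_subset)
    subgoal by (auto simp: image_comp)
    subgoal by auto
    subgoal by auto
    subgoal
    proof
      fix j assume j: "j \<in> {1..t-1}"
      then obtain l where l: "l \<in> {1..j}"
        "d (j + 1) = cell_add (d l) (if flood_r s' j = 0 then (-1, 0) else (0, -1))"
        using assms unfolding is_flood_def by blast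
      show "\<exists>l\<in>{1..j}. (neg \<circ> d) (j + 1) = cell_add ((neg \<circ> d) l) (if flood_r s' j = 0 then (1, 0) else (0, 1))"
        using l by (intro bexI[of _ l]) (auto simp: neg_def cell_add_def)
    qed
    done
qed

lemma flood_props:
  assumes t: "t \<ge> 1" and F: "is_flood (1, 0) (0, 1) t A c s"
  shows "c 1 \<in> A \<and> (\<forall>p\<in>A. fst p \<ge> fst (c 1) \<and> snd p \<ge> snd (c 1)) \<and>
    (\<forall>x y. (x, y) \<in> A \<and> y > snd (c 1) \<longrightarrow> (x, y - 1) \<in> A) \<and>
    (\<forall>x y. (x, y) \<in> A \<and> y = snd (c 1) \<and> x > fst (c 1) \<longrightarrow> (x - 1, y) \<in> A)"
proof -
  have A: "A = c ` {1..t}" and sb: "\<forall>j\<in>{1..t-1}. s j \<in> {0, 1}"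
    and rb: "\<forall>j\<in>{1..t-1}. flood_r s j \<in> {0, 1}"
    and st: "\<forall>j\<in>{1..t-1}. \<exists>l\<in>{1..j}.
        c (j + 1) = cell_add (c l) (if flood_r s j = 0 then (1,0) else (0,1))"
    using F unfolding is_flood_def by auto
  let ?a = "fst (c 1)" and ?b = "snd (c 1)"
  have bounds: "\<forall>i. i \<in> {1..n} \<longrightarrow> n \<le> t \<longrightarrow> fst (c i) \<ge> ?a \<and> snd (c i) \<ge> ?b" for n
  proof (induction n)
    case 0 then show ?case by auto
  next
    case (Suc n)
    show ?case
    proof (intro allI impI)
      fix i assume i: "i \<in> {1..Suc n}" "Suc n \<le> t"
      show "fst (c i) \<ge> ?a \<and> snd (c i) \<ge> ?b"
      proof (cases "i \<le> n")
        case True then show ?thesis using Suc.IH i by auto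
      next
        case False
        hence ii: "i = Suc n" using i by auto
        show ?thesis
        proof (cases "n = 0")
          case True then show ?thesis using ii by auto
        next
          case False
          have nn: "n \<in> {1..t-1}" using i False by auto
          obtain l where l: "l \<in> {1..n}"
            "c (n + 1) = cell_add (c l) (if flood_r s n = 0 then (1,0) else (0,1))"
            using st nn by blast
          then show ?thesis using Suc.IH i ii by (auto simp: cell_add_def)
        qed
      qed
    qed
  qed
  have col: "j \<le> t - 1 \<longrightarrow> flood_r s j = 0 \<longrightarrow> (\<forall>m\<in>{1..j+1}. snd (c m) = ?b)" for j
  proof (induction j)
    case 0 then show ?case by auto
  next
    case (Suc j)
    show ?case
    proof (intro impI)
      assume j: "Suc j \<le> t - 1" and r: "flood_r s (Suc j) = 0"
      have "flood_r s j \<in> {0,1}" using rb j by (cases "j = 0") (auto simp del: flood_r.simps simp add: flood_r.simps(1))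
      moreover have "s (Suc j) \<in> {0,1}" using sb j by auto
      ultimately have rj: "flood_r s j = 0" using r by auto
      then have IH: "\<forall>m\<in>{1..j+1}. snd (c m) = ?b" using Suc.IH j rj by (meson Suc_leD)
      obtain l where l: "l \<in> {1..Suc j}"
        "c (Suc j + 1) = cell_add (c l) (if flood_r s (Suc j) = 0 then (1,0) else (0,1))"
        using st[rule_format, of "Suc j"] j by (auto simp del: flood_r.simps)
      have "snd (c l) = ?b" using IH l(1) by (simp only: Suc_eq_plus1)
      moreover have "snd (c (Suc j + 1)) = snd (c l)" using l(2) r by (simp add: cell_add_def)
      ultimately have "snd (c (Suc j + 1)) = ?b" by simp
      then show "\<forall>m\<in>{1..Suc j+1}. snd (c m) = ?b"
      proof (intro ballI)
        fix m assume "m \<in> {1..Suc j+1}"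
        then have "m \<in> {1..j+1} \<or> m = Suc j + 1" by auto
        then show "snd (c m) = ?b" using IH \<open>snd (c (Suc j + 1)) = ?b\<close> by blast
      qed

    qed
  qed
  have pred: "\<exists>l\<in>{1..<i}. (r = 0 \<longrightarrow> snd (c i) = ?b \<and> c i = (fst (c l) + 1, snd (c l)))
       \<and> (r \<noteq> 0 \<longrightarrow> c i = (fst (c l), snd (c l) + 1))" if i: "i \<in> {2..t}" and rdef: "r = flood_r s (i - 1)" for i r
  proof -
    have j: "i - 1 \<in> {1..t-1}" using i by auto
    then obtain l where l: "l \<in> {1..i-1}"
      "c (i - 1 + 1) = cell_add (c l) (if flood_r s (i-1) = 0 then (1,0) else (0,1))"
      using st by blast
    have ci: "c i = cell_add (c l) (if r = 0 then (1,0) else (0,1))" using l(2) i rdef by (simp del: flood_r.simps)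
    have "r = 0 \<longrightarrow> snd (c i) = ?b" proof
      assume r0: "r = 0"
      have im: "i \<in> {1..i-1+1}" using i by auto
      have le: "i - 1 \<le> t - 1" using i by auto
      have rr: "flood_r s (i - 1) = 0" using rdef r0 by simp
      moreover have "\<forall>m\<in>{1..i-1+1}. snd (c m) = ?b" using col[of "i-1"] le rr by blast
      ultimately show "snd (c i) = ?b" using im by blast
    qed
    then show ?thesis using ci l i by (cases "r = 0"; intro bexI[of _ l]; auto simp: cell_add_def simp del: flood_r.simps)
  qed
  have c1: "c 1 \<in> A" using A t by auto
  have B: "\<forall>p\<in>A. fst p \<ge> ?a \<and> snd p \<ge> ?b" using bounds[of t] A by auto
  have L: "(x, y - 1) \<in> A" if xy: "(x, y) \<in> A" "y > ?b" for x y
  proof -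
    obtain i where i: "i \<in> {1..t}" "c i = (x, y)" using xy A by auto
    have "i \<noteq> 1" using i xy by auto
    hence i2: "i \<in> {2..t}" using i by auto
    obtain l where l: "l \<in> {1..<i}" "flood_r s (i - 1) = 0 \<longrightarrow> snd (c i) = ?b"
      "flood_r s (i - 1) \<noteq> 0 \<longrightarrow> c i = (fst (c l), snd (c l) + 1)"
      using pred[OF i2 refl] by blast
    have "c l = (x, y - 1)" using l i that by auto
    then show ?thesis proof -
      have "l \<in> {1..t}" using l i by auto
      then have "c l \<in> A" using A by auto
      then show ?thesis using \<open>c l = (x, y - 1)\<close> by simp
    qed
  qed
  have U: "(x - 1, y) \<in> A" if xy: "(x, y) \<in> A" "y = ?b" "x > ?a" for x y
  proof -
    obtain i where i: "i \<in> {1..t}" "c i = (x, y)" using xy A by auto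
    have "i \<noteq> 1" using i xy by (metis fst_conv less_irrefl)
    hence i2: "i \<in> {2..t}" using i by auto
    obtain l where l: "l \<in> {1..<i}"
      "flood_r s (i - 1) = 0 \<longrightarrow> c i = (fst (c l) + 1, snd (c l))"
      "flood_r s (i - 1) \<noteq> 0 \<longrightarrow> c i = (fst (c l), snd (c l) + 1)"
      using pred[OF i2 refl] by blast
    have lA: "c l \<in> A" using l i A by auto
    hence "snd (c l) \<ge> ?b" using B by auto
    hence "flood_r s (i - 1) = 0" using l(3) i that by auto
    hence "c l = (x - 1, y)" using l i by auto
    then show ?thesis using lA by simp
  qed
  show ?thesis using c1 B L U by blast
qed

lemma descend:
  assumes P0: "P y" and step: "\<And>y. P y \<Longrightarrow> y > b \<Longrightarrow> P (y - 1)" and "b \<le> y'" "y' \<le> (y::int)"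
  shows "P y'"
proof -
  have "y - int k \<ge> b \<longrightarrow> P (y - int k)" for k :: nat
  proof (induction k)
    case 0 then show ?case using P0 by simp
  next
    case (Suc k)
    show ?case
    proof
      assume h: "y - int (Suc k) \<ge> b"
      then have "P (y - int k)" using Suc by simp
      moreover have "y - int k > b" using h by simp
      ultimately have "P (y - int k - 1)" by (rule step)
      then show "P (y - int (Suc k))" by (simp add: algebra_simps)
    qed
  qed
  from this[of "nat (y - y')"] assms show ?thesis by auto
qed

lemma neg_mem: "(u, v) \<in> neg ` A \<longleftrightarrow> (- u, - v) \<in> A"
proof
  assume "(u, v) \<in> neg ` A" then obtain p where "p \<in> A" "(u, v) = neg p" by auto
  then show "(- u, - v) \<in> A" by (auto simp: neg_def)
next
  assume "(- u, - v) \<in> A" then have "neg (- u, - v) \<in> neg ` A" by blast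
  then show "(u, v) \<in> neg ` A" by (simp add: neg_def)
qed

theorem mainTheorem1:
  fixes t :: nat and A :: "cell set"
    and c d :: "nat \<Rightarrow> cell" and s s' :: "nat \<Rightarrow> int"
  assumes "t \<ge> 1"
    and "is_flood (1, 0) (0, 1) t A c s"
    and "is_flood (-1, 0) (0, -1) t A d s'"
  shows "\<exists>a a' b b' :: int. a \<le> a' \<and> b \<le> b' \<and>
           A = {a..a'} \<times> {b..b'} \<and> (a' - a + 1) * (b' - b + 1) = int t \<and>
           c 1 = (a, b) \<and> d 1 = (a', b')"
proof -
  obtain a b where ab: "c 1 = (a, b)" by (cases "c 1")
  obtain a' b' where ab': "d 1 = (a', b')" by (cases "d 1")
  have P1: "c 1 \<in> A \<and> (\<forall>p\<in>A. fst p \<ge> fst (c 1) \<and> snd p \<ge> snd (c 1)) \<and>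
    (\<forall>x y. (x, y) \<in> A \<and> y > snd (c 1) \<longrightarrow> (x, y - 1) \<in> A) \<and>
    (\<forall>x y. (x, y) \<in> A \<and> y = snd (c 1) \<and> x > fst (c 1) \<longrightarrow> (x - 1, y) \<in> A)"
    by (rule flood_props[OF assms(1,2)])
  have P2: "(neg \<circ> d) 1 \<in> neg ` A \<and> (\<forall>p\<in>neg ` A. fst p \<ge> fst ((neg \<circ> d) 1) \<and> snd p \<ge> snd ((neg \<circ> d) 1)) \<and>
    (\<forall>x y. (x, y) \<in> neg ` A \<and> y > snd ((neg \<circ> d) 1) \<longrightarrow> (x, y - 1) \<in> neg ` A) \<and>
    (\<forall>x y. (x, y) \<in> neg ` A \<and> y = snd ((neg \<circ> d) 1) \<and> x > fst ((neg \<circ> d) 1) \<longrightarrow> (x - 1, y) \<in> neg ` A)"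
    by (rule flood_props[OF assms(1) flood_neg[OF assms(3)]])
  have nd: "(neg \<circ> d) 1 = (- a', - b')" using ab' by (simp add: neg_def)
  have P1a: "c 1 \<in> A" and P1b: "\<forall>p\<in>A. fst p \<ge> fst (c 1) \<and> snd p \<ge> snd (c 1)"
    and P1c: "\<forall>x y. (x, y) \<in> A \<and> y > snd (c 1) \<longrightarrow> (x, y - 1) \<in> A"
    and P1d: "\<forall>x y. (x, y) \<in> A \<and> y = snd (c 1) \<and> x > fst (c 1) \<longrightarrow> (x - 1, y) \<in> A"
    using P1 by blast+
  have P2a: "(neg \<circ> d) 1 \<in> neg ` A" and P2b: "\<forall>p\<in>neg ` A. fst p \<ge> fst ((neg \<circ> d) 1) \<and> snd p \<ge> snd ((neg \<circ> d) 1)"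
    and P2c: "\<forall>x y. (x, y) \<in> neg ` A \<and> y > snd ((neg \<circ> d) 1) \<longrightarrow> (x, y - 1) \<in> neg ` A"
    using P2 by blast+
  have c1A: "(a, b) \<in> A" using P1a ab by simp
  have lb: "a \<le> x \<and> b \<le> y" if "(x, y) \<in> A" for x y
    using P1b[rule_format, OF that] ab by simp
  have L: "(x, y - 1) \<in> A" if "(x, y) \<in> A" "y > b" for x y
    using P1c[rule_format, of x y] that ab by simp
  have U: "(x - 1, y) \<in> A" if "(x, y) \<in> A" "y = b" "x > a" for x y
    using P1d[rule_format, of x y] that ab by simp
  have d1A: "(a', b') \<in> A"
  proof -
    have "(- a', - b') \<in> neg ` A" using P2a nd by simp
    then show ?thesis using neg_mem[of "-a'" "-b'" A] by simp
  qed
  have ub: "x \<le> a' \<and> y \<le> b'" if "(x, y) \<in> A" for x y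
  proof -
    have "(- x, - y) \<in> neg ` A" using that neg_mem[of "-x" "-y" A] by simp
    from P2b[rule_format, OF this] nd show ?thesis by simp
  qed
  have R: "(x, y + 1) \<in> A" if "(x, y) \<in> A" "y < b'" for x y
  proof -
    have "(- x, - y) \<in> neg ` A" using that neg_mem[of "-x" "-y" A] by simp
    moreover have "- y > - b'" using that by simp
    ultimately have "(- x, - y - 1) \<in> neg ` A" using P2c[rule_format, of "-x" "-y"] nd by simp
    then show ?thesis using neg_mem[of "-x" "-y-1" A] by (simp add: algebra_simps)
  qed
  have row: "(x, y') \<in> A" if "(x, y) \<in> A" "b \<le> y'" "y' \<le> b'" for x y y'
  proof (cases "y' \<le> y")
    case True
    show ?thesis by (rule descend[where P = "\<lambda>z. (x, z) \<in> A" and b = b and y = y]) (use that True L in auto)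
  next
    case False
    have "(x, - (- y')) \<in> A"
    proof (rule descend[where P = "\<lambda>z. (x, - z) \<in> A" and b = "- b'" and y = "- y"])
      fix z assume zA: "(x, - z) \<in> A" "z > - b'"
      moreover have "- z < b'" using \<open>z > - b'\<close> by simp
      ultimately have "(x, - z + 1) \<in> A" using R[OF zA(1)] by blast
      then show "(x, - (z - 1)) \<in> A" by (simp add: algebra_simps)
    qed (use that False in auto)
    then show ?thesis by simp
  qed
  have colm: "(x', b) \<in> A" if "(x, b) \<in> A" "a \<le> x'" "x' \<le> x" for x x'
    by (rule descend[where P = "\<lambda>z. (z, b) \<in> A" and b = a and y = x]) (use that U in auto)
  have le: "a \<le> a'" "b \<le> b'" using lb[OF d1A] by auto
  have rect: "A = {a..a'} \<times> {b..b'}"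
  proof
    show "A \<subseteq> {a..a'} \<times> {b..b'}" using lb ub by auto
  next
    show "{a..a'} \<times> {b..b'} \<subseteq> A"
    proof
      fix p assume "p \<in> {a..a'} \<times> {b..b'}"
      then obtain x y where p: "p = (x, y)" "a \<le> x" "x \<le> a'" "b \<le> y" "y \<le> b'" by auto
      have "(a', b) \<in> A" using row[OF d1A] le by auto
      then have "(x, b) \<in> A" using colm p by auto
      then show "p \<in> A" using row p le by auto
    qed
  qed
  have injc: "inj_on c {1..t}" and Ac: "A = c ` {1..t}" using assms(2) unfolding is_flood_def by auto
  have "card A = t" using card_image[OF injc] Ac by simp
  moreover have "card A = nat (a' - a + 1) * nat (b' - b + 1)"
    using rect by (simp add: card_cartesian_product)
  ultimately have "t = nat (a' - a + 1) * nat (b' - b + 1)" by simp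
  then have "int t = int (nat (a' - a + 1)) * int (nat (b' - b + 1))" by simp
  then have "int t = (a' - a + 1) * (b' - b + 1)" using le by simp
  then show ?thesis using le rect ab ab' by auto
qed

end
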